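(* Let $J\subset(0,\infty)$ be an open interval and let $u:J\to\mathbb{R}$ be a smooth function with $u'(\alpha)\neq 0$ for all $\alpha\in J$. The rotational surface in $(\mathbb{R}^3,\|\cdot\|)$ given by $\bar f(\alpha,v)=(\alpha\cos v,\ \alpha\sin v,\ u(\alpha))$ is minimal if and only if there are constants $c_2>0$ and $c_3\in\mathbb{R}$ and a fixed choice of sign such that $J\subset(c_2,\infty)$ and $$u(\alpha)=\pm\int_{c_2}^{\alpha}\frac{c_2^{2m-1}}{\left(\rho^{2m}-c_2^{2m}\right)^{\frac{2m-1}{2m}}}\,d\rho+c_3\qquad(\alpha\in J).$$
   Context: Fix an integer $m\ge 2$. Let $\Phi(x_1,x_2,x_3)=(x_1^2+x_2^2)^m+x_3^{2m}$ and let $\|\cdot\|$ be the norm on $\mathbb{R}^3$ whose unit sphere is $S=\{x\in\mathbb{R}^3:\Phi(x)=1\}$ (a smooth, strictly convex surface). For a surface given by a parametrization $f(s,v)$, its Birkhoff–Gauss map $\eta$ is the map into $S$ defined by requiring $\eta\in S$ and $\nabla\Phi(\eta)=\mu\, f_s\times f_v$ for some function $\mu>0$, where $\times$ is the standard cross product (so the tangent plane of $S$ at $\eta(p)$ is parallel to $T_pM$, and $d\eta_p$ is an endomorphism of $T_pM$). The Minkowski mean curvature is $H=\tfrac12\operatorname{trace}(d\eta_p)$, and the surface is minimal if $H\equiv 0$ (this condition does not depend on the orientation). *)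

theory Defs
  imports "HOL-Analysis.Analysis" "HOL-Analysis.Cross3"
begin

text \<open>The function Phi whose level set Phi = 1 is the unit sphere S of the norm.\<close>
definition Phi :: "nat \<Rightarrow> real^3 \<Rightarrow> real" where
  "Phi m x = ((x$1)^2 + (x$2)^2)^m + (x$3)^(2*m)"

definition partial_s :: "(real \<Rightarrow> real \<Rightarrow> real^3) \<Rightarrow> real \<Rightarrow> real \<Rightarrow> real^3" where
  "partial_s f s v = vector_derivative (\<lambda>t. f t v) (at s)"

definition partial_v :: "(real \<Rightarrow> real \<Rightarrow> real^3) \<Rightarrow> real \<Rightarrow> real \<Rightarrow> real^3" where
  "partial_v f s v = vector_derivative (\<lambda>t. f s t) (at v)"

definition BG_map :: "nat \<Rightarrow> (real \<Rightarrow> real \<Rightarrow> real^3) \<Rightarrow> real \<Rightarrow> real \<Rightarrow> real^3" where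
  "BG_map m f s v = (THE e. Phi m e = 1 \<and>
      (\<exists>\<mu>>0. GDERIV (Phi m) e :> (\<mu> *\<^sub>R cross3 (partial_s f s v) (partial_v f s v))))"

text \<open>Minkowski mean curvature H = trace(d eta)/2, the trace computed in the basis f_s, f_v
  of the tangent plane: d eta(f_s) = eta_s = a f_s + b f_v, d eta(f_v) = eta_v = c f_s + d f_v.\<close>
definition mink_mean_curv :: "nat \<Rightarrow> (real \<Rightarrow> real \<Rightarrow> real^3) \<Rightarrow> real \<Rightarrow> real \<Rightarrow> real" where
  "mink_mean_curv m f s v =
     (THE t. \<exists>a b c d.
        partial_s (BG_map m f) s v = a *\<^sub>R partial_s f s v + b *\<^sub>R partial_v f s v \<and>
        partial_v (BG_map m f) s v = c *\<^sub>R partial_s f s v + d *\<^sub>R partial_v f s v \<and>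
        t = a + d) / 2"

definition minimal_on :: "nat \<Rightarrow> (real \<Rightarrow> real \<Rightarrow> real^3) \<Rightarrow> (real \<times> real) set \<Rightarrow> bool" where
  "minimal_on m f D = (\<forall>(s,v)\<in>D.
      (\<lambda>t. BG_map m f t v) differentiable (at s) \<and>
      (\<lambda>t. BG_map m f s t) differentiable (at v) \<and>
      mink_mean_curv m f s v = 0)"

end

theory Submission
  imports Defs
begin

lemma vec3_decomp: "(vector [x,y,z] :: real^3) = x *\<^sub>R axis 1 1 + y *\<^sub>R axis 2 1 + z *\<^sub>R axis 3 1"
  by (simp add: vec_eq_iff forall_3 axis_def)

lemma vec3_deriv:
  assumes "(a has_real_derivative a') (at t)" "(b has_real_derivative b') (at t)" "(c has_real_derivative c') (at t)"
  shows "((\<lambda>t. vector [a t, b t, c t] :: real^3) has_vector_derivative vector [a', b', c']) (at t)"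
  unfolding vec3_decomp
  by (rule derivative_eq_intros assms refl | simp)+

lemma Phi_gderiv:
  assumes "m \<ge> 1"
  shows "GDERIV (Phi m) e :> vector [2*m*((e$1)^2+(e$2)^2)^(m-1)*e$1, 2*m*((e$1)^2+(e$2)^2)^(m-1)*e$2, 2*m*(e$3)^(2*m-1)]"
  unfolding gderiv_def Phi_def
  apply (rule derivative_eq_intros bounded_linear.has_derivative[OF bounded_linear_vec_nth] has_derivative_ident refl)+
  apply (simp add: inner_vec_def sum_3 algebra_simps)
  done

lemma grad_eq:
  assumes "GDERIV f e :> g" "GDERIV f e :> h"
  shows "g = h"
proof -
  have "(\<lambda>x. inner x g) = (\<lambda>x. inner x h)"
    using has_derivative_unique assms unfolding gderiv_def by blast
  then have "inner (g - h) g = inner (g - h) h" by metis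
  then have "inner (g-h) (g-h) = 0" by (simp add: inner_diff_right)
  then show ?thesis by simp
qed

lemma odd_pow_pos_base:
  fixes x :: real
  assumes "x ^ (2*k+1) > 0" shows "x > 0"
  proof -
  have "x^(2*k) \<ge> 0" by (simp add: power_mult)
  moreover have "x^(2*k+1) = x * x^(2*k)" by simp
  ultimately show ?thesis using assms by (metis mult_nonpos_nonneg not_less)
qed

lemma pow_inj_pos:
  fixes x y :: real
  assumes "x ^ n = y ^ n" "x \<ge> 0" "y \<ge> 0" "n > 0" shows "x = y"
  using assms by (meson power_eq_imp_eq_base)

lemma Phi_gderiv_k:
  "GDERIV (Phi (Suc k)) e :> vector [2*(real k+1)*((e$1)^2+(e$2)^2)^k*e$1, 2*(real k+1)*((e$1)^2+(e$2)^2)^k*e$2, 2*(real k+1)*(e$3)^(2*k+1)]"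
  using Phi_gderiv[of "Suc k" e] by (simp add: algebra_simps)

lemma BG_unique_core:
  fixes k :: nat and P \<alpha> v sg q z :: real
  assumes k: "k \<ge> 1" and P: "P > 0" and al: "\<alpha> > 0" and sg: "sg = 1 \<or> sg = -1"
    and q: "q > 0" "q^(2*k+1) = P" and z: "z > 0" "z^(2*k+2)*(1+q^(2*k+2)) = 1"
  shows "(THE e. Phi (Suc k) e = 1 \<and> (\<exists>\<mu>>0. GDERIV (Phi (Suc k)) e :> \<mu> *\<^sub>R vector[-\<alpha>*(sg*P)*cos v, -\<alpha>*(sg*P)* sin v, \<alpha>]))
     = vector[-sg*q*z*cos v, -sg*q*z* sin v, z]"
proof (rule the_equality)
  let ?w = "vector[-\<alpha>*(sg*P)*cos v, -\<alpha>*(sg*P)* sin v, \<alpha>] :: real^3"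
  let ?\<eta> = "vector[-sg*q*z*cos v, -sg*q*z* sin v, z] :: real^3"
  have sg2: "sg^2 = 1" using sg by auto
  have sgp: "sg^(2*k+1) = sg" using sg by (auto simp: power_mult)
  have R\<eta>: "(?\<eta>$1)^2 + (?\<eta>$2)^2 = (q*z)^2"
    using sg2 by (simp add: power_mult_distrib algebra_simps) (metis sin_cos_squared_add2 mult_1_right distrib_left power_mult_distrib)
  show "Phi (Suc k) ?\<eta> = 1 \<and> (\<exists>\<mu>>0. GDERIV (Phi (Suc k)) ?\<eta> :> \<mu> *\<^sub>R ?w)"
  proof
    have "Phi (Suc k) ?\<eta> = ((q*z)^2)^(Suc k) + z^(2*Suc k)"
      by (simp only: Phi_def R\<eta>) simp
    also have "\<dots> = z^(2*k+2)*(1+q^(2*k+2))"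
      unfolding power_mult[symmetric] by (simp add: power_mult_distrib algebra_simps)
    finally show "Phi (Suc k) ?\<eta> = 1" using z by simp
    define \<mu> where "\<mu> = 2*(real k+1)*z^(2*k+1)/\<alpha>"
    have "\<mu> > 0" using z al by (simp add: \<mu>_def)
    moreover have "vector [2*(real k+1)*((?\<eta>$1)^2+(?\<eta>$2)^2)^k*?\<eta>$1, 2*(real k+1)*((?\<eta>$1)^2+(?\<eta>$2)^2)^k*?\<eta>$2, 2*(real k+1)*(?\<eta>$3)^(2*k+1)] = \<mu> *\<^sub>R ?w"
    proof -
      have key: "((q*z)^2)^k * (sg*q*z) = sg * P * z^(2*k+1)"
        using q by (simp add: power_mult_distrib algebra_simps flip: power_mult)
      have c1: "2*(real k+1)*((q*z)^2)^k*(-sg*q*z*cos v) = \<mu>*(-\<alpha>*(sg*P)*cos v)"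
      proof -
        have "2*(real k+1)*((q*z)^2)^k*(-sg*q*z*cos v) = -(2*(real k+1)*cos v) * (((q*z)^2)^k * (sg*q*z))" by (simp add: algebra_simps)
        also have "\<dots> = -(2*(real k+1)*cos v) * (sg*P*z^(2*k+1))" by (simp only: key)
        also have "\<dots> = \<mu>*(-\<alpha>*(sg*P)*cos v)" using al by (simp add: \<mu>_def field_simps)
        finally show ?thesis .
      qed
      have c2: "2*(real k+1)*((q*z)^2)^k*(-sg*q*z* sin v) = \<mu>*(-\<alpha>*(sg*P)* sin v)"
      proof -
        have "2*(real k+1)*((q*z)^2)^k*(-sg*q*z* sin v) = -(2*(real k+1)* sin v) * (((q*z)^2)^k * (sg*q*z))" by (simp add: algebra_simps)
        also have "\<dots> = -(2*(real k+1)* sin v) * (sg*P*z^(2*k+1))" by (simp only: key)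
        also have "\<dots> = \<mu>*(-\<alpha>*(sg*P)* sin v)" using al by (simp add: \<mu>_def field_simps)
        finally show ?thesis .
      qed
      have c3: "2*(real k+1)*z^(2*k+1) = \<mu>*\<alpha>" using al by (simp add: \<mu>_def)
      show ?thesis unfolding R\<eta>
        by (simp only: vec_eq_iff forall_3 vector_3 vector_scaleR_component c1 c2 c3 real_scaleR_def simp_thms)
    qed
    ultimately show "\<exists>\<mu>>0. GDERIV (Phi (Suc k)) ?\<eta> :> \<mu> *\<^sub>R ?w"
      using Phi_gderiv_k[of k ?\<eta>] by metis
  qed
next
  fix e :: "real^3"
  assume asm: "Phi (Suc k) e = 1 \<and> (\<exists>\<mu>>0. GDERIV (Phi (Suc k)) e :> \<mu> *\<^sub>R vector[-\<alpha>*(sg*P)*cos v, -\<alpha>*(sg*P)* sin v, \<alpha>])"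
  then obtain \<mu> where mu: "\<mu> > 0" and gd: "GDERIV (Phi (Suc k)) e :> \<mu> *\<^sub>R vector[-\<alpha>*(sg*P)*cos v, -\<alpha>*(sg*P)* sin v, \<alpha>]" by blast
  define a b c where "a = e$1" "b = e$2" "c = e$3"
  define R where "R = a^2+b^2"
  define K where "K = \<mu>*\<alpha>/(2*(real k+1))"
  have K0: "K > 0" using mu al by (simp add: K_def)
  have geq: "(vector [2*(real k+1)*R^k*a, 2*(real k+1)*R^k*b, 2*(real k+1)*c^(2*k+1)] :: real^3) = \<mu> *\<^sub>R vector[-\<alpha>*(sg*P)*cos v, -\<alpha>*(sg*P)* sin v, \<alpha>]"
    using grad_eq[OF Phi_gderiv_k gd] by (simp add: a_b_c_def R_def)
  have e1: "R^k*a = -K* sg*P*cos v" and e2: "R^k*b = -K* sg*P* sin v" and e3: "c^(2*k+1) = K"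
    using geq by (auto simp: vec_eq_iff forall_3 K_def field_simps)
  have c0: "c > 0" using e3 K0 odd_pow_pos_base by metis
  have "R^(2*k)*R = (K*P)^2"
  proof -
    have "R^(2*k)*R = (R^k*a)^2 + (R^k*b)^2" by (simp add: R_def power_mult_distrib algebra_simps flip: power_mult)
    also have "\<dots> = (K*P)^2 * sg^2 * ((sin v)^2 + (cos v)^2)" unfolding e1 e2 by algebra
    finally show ?thesis using sg by auto
  qed
  then have R2: "R^(2*k+1) = (K*P)^2" by (simp add: mult.commute)
  have R0: "R \<ge> 0" by (simp add: R_def)
  define r where "r = sqrt R"
  have r0: "r \<ge> 0" and Rr: "R = r^2" using R0 by (auto simp: r_def)
  have "(r^(2*k+1))^2 = (K*P)^2" using R2 unfolding Rr by (simp add: algebra_simps flip: power_mult)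
  then have "r^(2*k+1) = K*P" using r0 K0 P by (simp add: power2_eq_iff_nonneg)
  also have "\<dots> = (c*q)^(2*k+1)" unfolding power_mult_distrib e3 q(2) ..
  finally have rpow: "r^(2*k+1) = (c*q)^(2*k+1)" .
  have cq0: "c*q \<ge> 0" using c0 q(1) by simp
  have rcq: "r = c*q" by (rule pow_inj_pos[OF rpow r0 cq0]) simp
  have "1 = R^(Suc k) + c^(2*Suc k)" using asm unfolding Phi_def a_b_c_def R_def by simp
  also have "\<dots> = c^(2*k+2)*(1+q^(2*k+2))" unfolding Rr rcq power_mult[symmetric]
    by (simp add: power_mult_distrib algebra_simps)
  finally have "c^(2*k+2) = z^(2*k+2)" using z by (smt (verit) mult_right_cancel q(1) zero_less_power)
  then have cz: "c = z" by (rule pow_inj_pos) (use c0 z in auto)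
  have Rk: "R^k = (q*z)^(2*k)" unfolding Rr rcq cz power_mult[symmetric] by (simp add: power_mult_distrib)
  have qz: "(q*z)^(2*k) > 0" using q z by simp
  have "(q*z)^(2*k) * a = (q*z)^(2*k) * (-sg*q*z*cos v)"
    using e1 unfolding Rk e3[symmetric] q(2)[symmetric] cz by (simp add: power_mult_distrib algebra_simps)
  then have ha: "a = -sg*q*z*cos v" using qz by (metis mult_left_cancel order_less_irrefl)
  have "(q*z)^(2*k) * b = (q*z)^(2*k) * (-sg*q*z* sin v)"
    using e2 unfolding Rk e3[symmetric] q(2)[symmetric] cz by (simp add: power_mult_distrib algebra_simps)
  then have hb: "b = -sg*q*z* sin v" using qz by (metis mult_left_cancel order_less_irrefl)
  show "e = vector[-sg*q*z*cos v, -sg*q*z* sin v, z]"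
    using ha hb cz unfolding a_b_c_def by (simp add: vec_eq_iff forall_3)
qed

lemma powr_pow_inv:
  fixes P :: real assumes "P > 0" "n > 0"
  shows "(P powr (1/real n)) ^ n = P"
  using assms by (simp add: powr_realpow[symmetric] powr_powr)

lemma powr_pow_neg_inv:
  fixes X :: real assumes "X > 0" "n > 0"
  shows "(X powr (-1/real n)) ^ n * X = 1"
proof -
  have "(X powr (-1/real n)) ^ n = X powr (-1)"
    using assms by (simp add: powr_realpow[symmetric] powr_powr)
  then show ?thesis using assms by (simp add: powr_minus)
qed

definition surf :: "(real \<Rightarrow> real) \<Rightarrow> real \<Rightarrow> real \<Rightarrow> real^3" where
  "surf u = (\<lambda>\<alpha> v. vector [\<alpha> * cos v, \<alpha> * sin v, u \<alpha>])"

lemma ps_surf: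
  assumes "u differentiable (at t)"
  shows "partial_s (surf u) t v = vector [cos v, sin v, deriv u t]"
proof -
  have "((\<lambda>t. vector [t * cos v, t * sin v, u t] :: real^3) has_vector_derivative vector [cos v, sin v, deriv u t]) (at t)"
    by (rule vec3_deriv) (auto intro!: derivative_eq_intros simp: DERIV_deriv_iff_real_differentiable assms)
  then show ?thesis unfolding partial_s_def surf_def by (rule vector_derivative_at)
qed

lemma pv_surf:
  shows "partial_v (surf u) t v = vector [- t * sin v, t * cos v, 0]"
proof -
  have "((\<lambda>v. vector [t * cos v, t * sin v, u t] :: real^3) has_vector_derivative vector [- t * sin v, t * cos v, 0]) (at v)"
    by (rule vec3_deriv) (auto intro!: derivative_eq_intros)
  then show ?thesis unfolding partial_v_def surf_def by (rule vector_derivative_at)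
qed

lemma cross_surf:
  "cross3 (vector [cos v, sin v, p]) (vector [- t * sin v, t * cos v, 0]) = vector[-t*p*cos v, -t*p * sin v, t]"
proof -
  have "t * (cos v * cos v) + t * (sin v * sin v) = t"
    by (metis distrib_left mult_1_right sin_cos_squared_add3)
  then show ?thesis by (simp add: cross3_def vec_eq_iff forall_3 algebra_simps)
qed

lemma BG_surf:
  fixes k :: nat and sg t v :: real
  assumes k: "k \<ge> 1" and t: "t > 0" and sg: "sg = 1 \<or> sg = -1"
    and ud: "u differentiable (at t)" and pos: "sg * deriv u t > 0"
  shows "BG_map (Suc k) (surf u) t v =
     vector[-sg*((sg * deriv u t) powr (1/real(2*k+1)))*((1 + ((sg * deriv u t) powr (1/real(2*k+1)))^(2*k+2)) powr (-1/real(2*k+2)))*cos v,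
            -sg*((sg * deriv u t) powr (1/real(2*k+1)))*((1 + ((sg * deriv u t) powr (1/real(2*k+1)))^(2*k+2)) powr (-1/real(2*k+2))) * sin v,
            ((1 + ((sg * deriv u t) powr (1/real(2*k+1)))^(2*k+2)) powr (-1/real(2*k+2)))]"
proof -
  define P where "P = sg * deriv u t"
  define q where "q = P powr (1/real(2*k+1))"
  define z where "z = (1 + q^(2*k+2)) powr (-1/real(2*k+2))"
  have P0: "P > 0" using pos by (simp add: P_def)
  have q0: "q > 0" using P0 by (simp add: q_def)
  have qP: "q^(2*k+1) = P" unfolding q_def using powr_pow_inv[OF P0, of "2*k+1"] by simp
  have X0: "1 + q^(2*k+2) > 0" using q0 by (simp add: add_pos_nonneg)
  have z0: "z > 0" unfolding z_def using X0 by simp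
  have zq: "z^(2*k+2)*(1+q^(2*k+2)) = 1" unfolding z_def using powr_pow_neg_inv[OF X0, of "2*k+2"] by simp
  have du: "deriv u t = sg * P" using sg by (auto simp: P_def)
  have cr: "cross3 (partial_s (surf u) t v) (partial_v (surf u) t v) = vector[-t*(sg*P)*cos v, -t*(sg*P) * sin v, t]"
    unfolding ps_surf[OF ud] pv_surf cross_surf du ..
  have "BG_map (Suc k) (surf u) t v = vector[-sg*q*z*cos v, -sg*q*z * sin v, z]"
    unfolding BG_map_def cr using BG_unique_core[OF k P0 t sg q0 qP z0 zq, of v] by simp
  then show ?thesis unfolding z_def q_def P_def .
qed

lemma core:
  fixes k :: nat and J :: "real set" and u :: "real \<Rightarrow> real" and sg :: real
  assumes k: "k \<ge> 1" and Jo: "open J" and Ji: "is_interval J" and Jp: "J \<subseteq> {0<..}"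
    and ud: "\<forall>x\<in>J. u differentiable (at x)" and udd: "\<forall>x\<in>J. deriv u differentiable (at x)"
    and sg: "sg = 1 \<or> sg = -1" and pos: "\<forall>t\<in>J. sg * deriv u t > 0"
  shows "minimal_on (Suc k) (surf u) (J \<times> UNIV) \<longleftrightarrow>
    (\<exists>C. \<forall>s\<in>J. s * ((sg * deriv u s) powr (1/real(2*k+1))) * ((1 + ((sg * deriv u s) powr (1/real(2*k+1)))^(2*k+2)) powr (-1/real(2*k+2))) = C)"
proof -
  define Q where "Q = (\<lambda>t. (sg * deriv u t) powr (1/real(2*k+1)))"
  define Z where "Z = (\<lambda>t. (1 + Q t^(2*k+2)) powr (-1/real(2*k+2)))"
  define Rho where "Rho = (\<lambda>t. -sg * Q t * Z t)"
  have sg2: "sg * sg = 1" using sg by auto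
  have Q0: "Q t > 0" if "t \<in> J" for t
  proof -
    have "sg * deriv u t \<noteq> 0" using pos that by (metis less_irrefl)
    then show ?thesis by (simp add: Q_def)
  qed
  have QP: "Q t ^ (2*k+1) = sg * deriv u t" if "t \<in> J" for t
    unfolding Q_def using powr_pow_inv[of "sg * deriv u t" "2*k+1"] pos that by simp
  have X0: "1 + Q t^(2*k+2) > 0" if "t \<in> J" for t using Q0[OF that] by (simp add: add_pos_nonneg)
  have Z0: "Z t > 0" if "t \<in> J" for t unfolding Z_def using X0[OF that] by simp
  have ZQ: "Z t^(2*k+2)*(1+Q t^(2*k+2)) = 1" if "t \<in> J" for t
    unfolding Z_def using powr_pow_neg_inv[OF X0[OF that], of "2*k+2"] by simp
  have BG: "BG_map (Suc k) (surf u) t v = vector[Rho t * cos v, Rho t * sin v, Z t]" if "t \<in> J" for t v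
    using BG_surf[OF k _ sg, of t u v] that Jp ud pos unfolding Rho_def Z_def Q_def by auto
  have dQ: "Q differentiable (at s)" if "s \<in> J" for s
  proof -
    have "deriv u differentiable (at s)" using udd that by blast
    then obtain u2 where u2: "DERIV (deriv u) s :> u2" unfolding real_differentiable_def by blast
    have "DERIV (\<lambda>t. sg * deriv u t) s :> sg * u2" by (rule DERIV_cmult[OF u2])
    from DERIV_fun_powr[OF this, of "1/real(2*k+1)"] pos that
    show ?thesis unfolding Q_def real_differentiable_def by auto
  qed
  have dZ: "Z differentiable (at s)" if "s \<in> J" for s
  proof -
    have "Q differentiable (at s)" using dQ[OF that] .
    then obtain Q' where Q': "DERIV Q s :> Q'" unfolding real_differentiable_def by blast
    have "DERIV (\<lambda>t. 1 + Q t^(2*k+2)) s :> 0 + of_nat (2*k+2) * (Q' * Q s ^ (2*k+2 - Suc 0))" by (intro derivative_intros Q')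
    from DERIV_fun_powr[OF this X0[OF that], of "-1/real(2*k+2)"]
    show ?thesis unfolding Z_def real_differentiable_def by auto
  qed
  have dRho: "Rho differentiable (at s)" if "s \<in> J" for s
    unfolding Rho_def by (intro differentiable_mult differentiable_const dQ[OF that] dZ[OF that])
  have DRho: "DERIV Rho s :> deriv Rho s" if "s \<in> J" for s using dRho[OF that] DERIV_deriv_iff_real_differentiable by blast
  have DZ: "DERIV Z s :> deriv Z s" if "s \<in> J" for s using dZ[OF that] DERIV_deriv_iff_real_differentiable by blast
  have PS: "((\<lambda>t. BG_map (Suc k) (surf u) t v) has_vector_derivative vector[deriv Rho s * cos v, deriv Rho s * sin v, deriv Z s]) (at s)"
    if "s \<in> J" for s v
  proof -
    have "((\<lambda>t. vector[Rho t * cos v, Rho t * sin v, Z t] :: real^3) has_vector_derivative vector[deriv Rho s * cos v, deriv Rho s * sin v, deriv Z s]) (at s)"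
      by (rule vec3_deriv DERIV_cmult_right DRho[OF that] DZ[OF that])+
    then show ?thesis by (rule has_vector_derivative_transform_within_open[OF _ Jo that]) (simp add: BG)
  qed
  have PV: "((\<lambda>t. BG_map (Suc k) (surf u) s t) has_vector_derivative vector[- Rho s * sin v, Rho s * cos v, 0]) (at v)"
    if "s \<in> J" for s v
  proof -
    have "((\<lambda>t. vector[Rho s * cos t, Rho s * sin t, Z s] :: real^3) has_vector_derivative vector[- Rho s * sin v, Rho s * cos v, 0]) (at v)"
      by (rule vec3_deriv) (auto intro!: derivative_eq_intros)
    then show ?thesis using BG[OF that] by simp
  qed
  have F5: "deriv Z s = deriv u s * deriv Rho s" if "s \<in> J" for s
  proof -
    have one: "Rho t^(2*k+2) + Z t^(2*k+2) = 1" if "t \<in> J" for t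
    proof -
      have r2: "Rho t^2 = (Q t * Z t)^2" unfolding Rho_def using sg by (auto simp: power2_eq_square)
      have e: "2*k+2 = 2*(k+1)" by simp
      have "Rho t^(2*k+2) = (Q t * Z t)^(2*k+2)" unfolding e power_mult r2 ..
      then have "Rho t^(2*k+2) = Q t^(2*k+2) * Z t^(2*k+2)" by (simp only: power_mult_distrib)
      then show ?thesis using ZQ[OF that] by (simp add: algebra_simps)
    qed
    have "DERIV (\<lambda>t. Rho t^(2*k+2) + Z t^(2*k+2)) s :> of_nat (2*k+2) * (deriv Rho s * Rho s ^ (2*k+2 - Suc 0)) + of_nat (2*k+2) * (deriv Z s * Z s ^ (2*k+2 - Suc 0))"
      by (intro derivative_intros DRho[OF that] DZ[OF that])
    moreover have "DERIV (\<lambda>t. Rho t^(2*k+2) + Z t^(2*k+2)) s :> 0"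
      using has_field_derivative_transform_within_open[OF DERIV_const[of 1 "at s"] Jo that] one by auto
    ultimately have "real (2*k+2) * (deriv Rho s * Rho s ^ (2*k+2 - Suc 0)) + real (2*k+2) * (deriv Z s * Z s ^ (2*k+2 - Suc 0)) = 0"
      by (rule DERIV_unique)
    then have "real (2*k+2) * (deriv Rho s * Rho s ^ (2*k+1) + deriv Z s * Z s ^ (2*k+1)) = 0"
      by (simp add: algebra_simps)
    then have A: "deriv Rho s * Rho s ^ (2*k+1) + deriv Z s * Z s ^ (2*k+1) = 0"
      by (simp del: of_nat_add of_nat_mult)
    have B: "Rho s ^ (2*k+1) = - deriv u s * Z s^(2*k+1)"
    proof -
      have "Rho s ^ (2*k+1) = (-sg)^(2*k+1) * Q s^(2*k+1) * Z s^(2*k+1)" unfolding Rho_def by (simp add: power_mult_distrib)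
      also have "(-sg)^(2*k+1) = -sg" using sg by (auto simp: power_mult)
      finally show ?thesis unfolding QP[OF that] using sg2 by (simp add: algebra_simps)
    qed
    have "Z s^(2*k+1) * (deriv Z s - deriv u s * deriv Rho s) = deriv Rho s * Rho s ^ (2*k+1) + deriv Z s * Z s ^ (2*k+1)"
      unfolding B by (simp add: algebra_simps)
    then have "Z s^(2*k+1) * (deriv Z s - deriv u s * deriv Rho s) = 0" using A by simp
    then show ?thesis using Z0[OF that] by simp
  qed
  have H: "mink_mean_curv (Suc k) (surf u) s v = (deriv Rho s + Rho s / s) / 2" if "s \<in> J" for s v
  proof -
    have s0: "s > 0" using Jp that by auto
    have ps: "partial_s (BG_map (Suc k) (surf u)) s v = vector[deriv Rho s * cos v, deriv Rho s * sin v, deriv Z s]"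
      unfolding partial_s_def using PS[OF that] by (rule vector_derivative_at)
    have pv: "partial_v (BG_map (Suc k) (surf u)) s v = vector[- Rho s * sin v, Rho s * cos v, 0]"
      unfolding partial_v_def using PV[OF that] by (rule vector_derivative_at)
    have fs: "partial_s (surf u) s v = vector [cos v, sin v, deriv u s]" using ps_surf ud that by blast
    have fv: "partial_v (surf u) s v = vector [- s * sin v, s * cos v, 0]" by (rule pv_surf)
    have "(THE t. \<exists>a b c d.
        (vector[deriv Rho s * cos v, deriv Rho s * sin v, deriv Z s] :: real^3) = a *\<^sub>R vector [cos v, sin v, deriv u s] + b *\<^sub>R vector [- s * sin v, s * cos v, 0] \<and>
        (vector[- Rho s * sin v, Rho s * cos v, 0] :: real^3) = c *\<^sub>R vector [cos v, sin v, deriv u s] + d *\<^sub>R vector [- s * sin v, s * cos v, 0] \<and>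
        t = a + d) = deriv Rho s + Rho s / s"
    proof (rule the_equality)
      show "\<exists>a b c d.
        (vector[deriv Rho s * cos v, deriv Rho s * sin v, deriv Z s] :: real^3) = a *\<^sub>R vector [cos v, sin v, deriv u s] + b *\<^sub>R vector [- s * sin v, s * cos v, 0] \<and>
        (vector[- Rho s * sin v, Rho s * cos v, 0] :: real^3) = c *\<^sub>R vector [cos v, sin v, deriv u s] + d *\<^sub>R vector [- s * sin v, s * cos v, 0] \<and>
        deriv Rho s + Rho s / s = a + d"
        using s0 F5[OF that] by (rule_tac x="deriv Rho s" in exI, rule_tac x=0 in exI, rule_tac x=0 in exI, rule_tac x="Rho s / s" in exI)
          (simp add: vec_eq_iff forall_3)
    next
      fix t assume "\<exists>a b c d.
        (vector[deriv Rho s * cos v, deriv Rho s * sin v, deriv Z s] :: real^3) = a *\<^sub>R vector [cos v, sin v, deriv u s] + b *\<^sub>R vector [- s * sin v, s * cos v, 0] \<and>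
        (vector[- Rho s * sin v, Rho s * cos v, 0] :: real^3) = c *\<^sub>R vector [cos v, sin v, deriv u s] + d *\<^sub>R vector [- s * sin v, s * cos v, 0] \<and>
        t = a + d"
      then obtain a b c d where
        e1: "deriv Rho s * cos v = a * cos v - b * s * sin v" and e2: "deriv Rho s * sin v = a * sin v + b * s * cos v" and
        e3: "- Rho s * sin v = c * cos v - d * s * sin v" and e4: "Rho s * cos v = c * sin v + d * s * cos v" and t: "t = a + d"
        by (auto simp: vec_eq_iff forall_3 algebra_simps)
      have trig: "(X * cos v) * cos v + (X * sin v) * sin v = X" for X
      proof -
        have "(X * cos v) * cos v + (X * sin v) * sin v = X * (cos v * cos v + sin v * sin v)" by (simp only: distrib_left mult.assoc)
        also have "cos v * cos v + sin v * sin v = 1" by (rule sin_cos_squared_add3)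
        finally show ?thesis by simp
      qed
      have "deriv Rho s = (deriv Rho s * cos v) * cos v + (deriv Rho s * sin v) * sin v" by (rule trig[symmetric])
      also have "\<dots> = (a * cos v) * cos v + (a * sin v) * sin v" unfolding e1 e2 by (simp add: algebra_simps)
      also have "\<dots> = a" by (rule trig)
      finally have ha: "a = deriv Rho s" ..
      have "Rho s = (Rho s * cos v) * cos v + (Rho s * sin v) * sin v" by (rule trig[symmetric])
      also have "\<dots> = (- Rho s * sin v) * (- sin v) + (Rho s * cos v) * cos v" by (simp add: algebra_simps)
      also have "\<dots> = ((d * s) * cos v) * cos v + ((d * s) * sin v) * sin v" unfolding e3 e4 by (simp add: algebra_simps)
      also have "\<dots> = d * s" by (rule trig)
      finally have "d = Rho s / s" using s0 by (simp add: field_simps)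
      then show "t = deriv Rho s + Rho s / s" using ha t by simp
    qed
    then show ?thesis unfolding mink_mean_curv_def ps pv fs fv by simp
  qed
  have min_iff: "minimal_on (Suc k) (surf u) (J \<times> UNIV) \<longleftrightarrow> (\<forall>s\<in>J. deriv Rho s + Rho s / s = 0)"
  proof -
    have "(\<lambda>t. BG_map (Suc k) (surf u) t v) differentiable (at s) \<and> (\<lambda>t. BG_map (Suc k) (surf u) s t) differentiable (at v)"
      if "s \<in> J" for s v using PS[OF that] PV[OF that] differentiableI_vector by blast
    then show ?thesis unfolding minimal_on_def using H by auto
  qed
  have DW: "DERIV (\<lambda>t. t * Rho t) s :> s * (deriv Rho s + Rho s / s)" if "s \<in> J" for s
  proof -
    have "DERIV (\<lambda>t. t * Rho t) s :> 1 * Rho s + deriv Rho s * s" by (rule DERIV_mult[OF DERIV_ident DRho[OF that]])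
    moreover have "1 * Rho s + deriv Rho s * s = s * (deriv Rho s + Rho s / s)" using Jp that by (auto simp: field_simps)
    ultimately show ?thesis by simp
  qed
  have W: "t * Q t * Z t = -sg * (t * Rho t)" for t unfolding Rho_def using sg2 by (simp add: algebra_simps)
  have "(\<forall>s\<in>J. deriv Rho s + Rho s / s = 0) \<longleftrightarrow> (\<exists>C. \<forall>s\<in>J. s * Rho s = C)"
  proof
    assume h: "\<forall>s\<in>J. deriv Rho s + Rho s / s = 0"
    show "\<exists>C. \<forall>s\<in>J. s * Rho s = C"
    proof (rule has_field_derivative_zero_constant)
      show "convex J" using Ji by (simp add: is_interval_convex)
      fix x assume "x \<in> J" then show "((\<lambda>t. t * Rho t) has_field_derivative 0) (at x within J)"
        using DW[of x] h by (auto intro: has_field_derivative_at_within)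
    qed
  next
    assume "\<exists>C. \<forall>s\<in>J. s * Rho s = C"
    then obtain C where C: "\<forall>s\<in>J. s * Rho s = C" by blast
    show "\<forall>s\<in>J. deriv Rho s + Rho s / s = 0"
    proof
      fix s assume s: "s \<in> J"
      have "DERIV (\<lambda>t. t * Rho t) s :> 0"
        using has_field_derivative_transform_within_open[OF DERIV_const[of C "at s"] Jo s] C by auto
      then have "s * (deriv Rho s + Rho s / s) = 0" using DW[OF s] DERIV_unique by blast
      then show "deriv Rho s + Rho s / s = 0" using s Jp by auto
    qed
  qed
  also have "\<dots> \<longleftrightarrow> (\<exists>C. \<forall>s\<in>J. s * Q s * Z s = C)"
    unfolding W using sg2 by (metis (no_types, opaque_lifting) mult_minus_left mult.assoc mult_1 neg_equal_iff_equal)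
  finally show ?thesis unfolding min_iff Q_def Z_def .
qed

lemma g_integrable:
  fixes c b :: real and N M :: nat
  assumes c: "c > 0" and NM: "N < M" "0 < N"
  shows "(\<lambda>\<rho>. c^N / (\<rho>^M - c^M) powr (real N / real M)) integrable_on {c..b}"
proof (cases "b \<le> c")
  case True
  show ?thesis
  proof (cases "b < c")
    case True then show ?thesis by (simp add: integrable_on_empty)
  next
    case False then have "b = c" using \<open>b \<le> c\<close> by simp
    then show ?thesis using integrable_on_refl[of _ c] by (simp add: interval_cbox[symmetric])
  qed
next
  case False
  then have bc: "c < b" by simp
  define \<beta> where "\<beta> = real N / real M"
  have \<beta>: "0 < \<beta>" "\<beta> < 1" using NM by (auto simp: \<beta>_def field_simps)
  define K where "K = c^N / (c^(M-1)) powr \<beta>"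
  define g where "g = (\<lambda>\<rho>::real. c^N / (\<rho>^M - c^M) powr \<beta>)"
  define h where "h = (\<lambda>x::real. K * (x - c) powr (-\<beta>))"
  have hint: "h integrable_on {c<..<b}"
  proof -
    have "((\<lambda>x. x powr (-\<beta>)) has_integral ((b-c) powr (-\<beta>+1) / (-\<beta>+1))) {0..b-c}"
      using \<beta> bc by (intro has_integral_powr_from_0) auto
    then have "(((\<lambda>x. (x - c) powr (-\<beta>)) \<circ> (+) c) has_integral ((b-c) powr (-\<beta>+1) / (-\<beta>+1))) {0..b-c}"
      by (simp add: o_def)
    then have "((\<lambda>x. (x - c) powr (-\<beta>)) has_integral ((b-c) powr (-\<beta>+1) / (-\<beta>+1))) {c..b}"
      unfolding has_integral_shift_Icc_real by simp
    then have "h integrable_on {c..b}" using has_integral_mult_right[of _ _ _ K] unfolding h_def integrable_on_def by blast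
    then show ?thesis using integrable_on_Icc_iff_Ioo by blast
  qed
  have cont: "continuous_on {c<..<b} g"
  proof -
    have pos: "x^M - c^M > 0" if "x \<in> {c<..<b}" for x
      using that c NM by (simp add: power_strict_mono)
    show ?thesis unfolding g_def by (intro continuous_intros ballI) (use pos in force)+
  qed
  have meas: "g \<in> borel_measurable (lebesgue_on {c<..<b})"
    by (rule continuous_imp_measurable_on_sets_lebesgue[OF cont]) auto
  have bound: "\<bar>g x\<bar> \<le> h x" if x: "x \<in> {c<..<b}" for x
  proof -
    have xc: "x > c" using x by auto
    have low: "(x - c) * c^(M-1) \<le> x^M - c^M"
    proof -
      have "x^M = x * x^(M-1)" "c^M = c * c^(M-1)" using NM by (auto simp: power_eq_if)
      moreover have "c^(M-1) \<le> x^(M-1)" using xc c by (intro power_mono) auto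
      ultimately show ?thesis using xc c by (simp add: algebra_simps)
    qed
    have pos1: "(x - c) * c^(M-1) > 0" using xc c by simp
    have "g x = c^N / (x^M - c^M) powr \<beta>" by (simp add: g_def)
    also have "\<dots> \<le> c^N / ((x - c) * c^(M-1)) powr \<beta>"
    proof (rule divide_left_mono)
      have pos2: "x^M - c^M > 0" using low pos1 by linarith
      show "((x - c) * c^(M-1)) powr \<beta> \<le> (x^M - c^M) powr \<beta>" using low pos1 \<beta> by (intro powr_mono2) auto
      show "0 \<le> c^N" using c by simp
      show "0 < (x^M - c^M) powr \<beta> * ((x - c) * c^(M-1)) powr \<beta>" using pos1 pos2 c by (intro mult_pos_pos powr_gt_zero[THEN iffD2]) (auto simp del: powr_gt_zero)
    qed
    also have "\<dots> = h x" unfolding h_def K_def using xc c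
      by (simp add: powr_mult powr_minus divide_inverse)
    finally have "g x \<le> h x" .
    moreover have "g x \<ge> 0" using c by (simp add: g_def)
    ultimately show ?thesis by simp
  qed
  have "g integrable_on {c<..<b}"
    by (rule measurable_bounded_by_integrable_imp_integrable_real[OF meas hint bound]) auto
  then show ?thesis using integrable_on_Icc_iff_Ioo unfolding g_def \<beta>_def by blast
qed

lemma G_deriv:
  fixes g :: "real \<Rightarrow> real"
  assumes int: "\<And>b. g integrable_on {c..b}" and x: "c < x" and cont: "continuous_on {c<..} g"
  shows "((\<lambda>y. integral {c..y} g) has_real_derivative g x) (at x)"
proof -
  have "isCont g x" using continuous_on_interior[OF cont] x by (simp add: interior_open)
  then have ct: "continuous (at x within ({c..x+1} - {})) g"
    by (rule continuous_at_imp_continuous_at_within)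
  have vd: "((\<lambda>y. integral {c..y} g) has_vector_derivative g x) (at x within ({c..x+1} - {}))"
    by (rule integral_has_vector_derivative_continuous_at[OF int _ _ ct]) (use x in auto)
  have ip: "x \<in> interior {c..x+1}" using x by simp
  have eq: "at x within ({c..x+1} - {}) = at x" using at_within_interior[OF ip] by simp
  show ?thesis unfolding has_real_derivative_iff_has_vector_derivative using vd unfolding eq .
qed

lemma const_sign:
  fixes p :: "real \<Rightarrow> real"
  assumes "is_interval J" "J \<noteq> {}" "continuous_on J p" "\<forall>t\<in>J. p t \<noteq> 0"
  shows "\<exists>sg. (sg = 1 \<or> sg = -1) \<and> (\<forall>t\<in>J. sg * p t > 0)"
proof -
  obtain t0 where t0: "t0 \<in> J" using assms(2) by blast
  have "connected (p ` J)" using assms(1,3) is_interval_connected_1 connected_continuous_image by blast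
  then have I: "is_interval (p ` J)" using is_interval_connected_1 by blast
  have no0: "0 \<notin> p ` J" using assms(4) by auto
  have Iv: "\<And>a b x. a \<in> p ` J \<Longrightarrow> b \<in> p ` J \<Longrightarrow> a \<le> x \<Longrightarrow> x \<le> b \<Longrightarrow> x \<in> p ` J"
    using I unfolding is_interval_1 by blast
  show ?thesis
  proof (cases "p t0 > 0")
    case True
    have "\<forall>t\<in>J. 1 * p t > 0"
    proof (rule ccontr)
      assume "\<not> (\<forall>t\<in>J. 1 * p t > 0)"
      then obtain t where t: "t \<in> J" "p t \<le> 0" by auto
      then have "0 \<in> p ` J" using Iv[of "p t" "p t0" 0] t0 True by auto
      then show False using no0 by blast
    qed
    then show ?thesis by blast
  next
    case False
    then have F: "p t0 < 0" using assms(4) t0 by force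
    have "\<forall>t\<in>J. -1 * p t > 0"
    proof (rule ccontr)
      assume "\<not> (\<forall>t\<in>J. -1 * p t > 0)"
      then obtain t where t: "t \<in> J" "p t \<ge> 0" by auto
      then have "0 \<in> p ` J" using Iv[of "p t0" "p t" 0] t0 F by auto
      then show False using no0 by blast
    qed
    then show ?thesis by blast
  qed
qed

lemma alg_fwd:
  fixes k :: nat and s P :: real
  assumes s: "s > 0" and P: "P > 0"
  shows "s * (P powr (1/real(2*k+1))) * ((1 + (P powr (1/real(2*k+1)))^(2*k+2)) powr (-1/real(2*k+2))) > 0
    \<and> s * (P powr (1/real(2*k+1))) * ((1 + (P powr (1/real(2*k+1)))^(2*k+2)) powr (-1/real(2*k+2))) < s
    \<and> P = (s * (P powr (1/real(2*k+1))) * ((1 + (P powr (1/real(2*k+1)))^(2*k+2)) powr (-1/real(2*k+2))))^(2*k+1)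
         / (s^(2*k+2) - (s * (P powr (1/real(2*k+1))) * ((1 + (P powr (1/real(2*k+1)))^(2*k+2)) powr (-1/real(2*k+2))))^(2*k+2)) powr (real(2*k+1)/real(2*k+2))"
proof -
  define q where "q = P powr (1/real(2*k+1))"
  define z where "z = (1 + q^(2*k+2)) powr (-1/real(2*k+2))"
  have q0: "q > 0" using P by (simp add: q_def)
  have qP: "q^(2*k+1) = P" unfolding q_def using powr_pow_inv[OF P, of "2*k+1"] by simp
  have X0: "1 + q^(2*k+2) > 0" using q0 by (simp add: add_pos_nonneg)
  have z0: "z > 0" unfolding z_def using X0 by simp
  have zq: "z^(2*k+2)*(1+q^(2*k+2)) = 1" unfolding z_def using powr_pow_neg_inv[OF X0, of "2*k+2"] by simp
  define C where "C = s*q*z"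
  have C0: "C > 0" using s q0 z0 by (simp add: C_def)
  have D: "s^(2*k+2) - C^(2*k+2) = (s*z)^(2*k+2)"
  proof -
    have "s^(2*k+2) = s^(2*k+2) * (z^(2*k+2)*(1+q^(2*k+2)))" using zq by simp
    then show ?thesis unfolding C_def by (simp add: power_mult_distrib algebra_simps)
  qed
  have "C^(2*k+2) < s^(2*k+2)" using D s z0 by (smt (verit) zero_less_power mult_pos_pos)
  then have Cs: "C < s" using s by (meson power_less_imp_less_base less_imp_le)
  have "(s^(2*k+2) - C^(2*k+2)) powr (real(2*k+1)/real(2*k+2)) = (s*z)^(2*k+1)"
  proof -
    have sz: "s*z > 0" using s z0 by simp
    have e1: "(s*z)^(2*k+2) = (s*z) powr (real (2*k+2))" using powr_realpow[OF sz] by metis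
    have e2: "real (2*k+2) * (real(2*k+1)/real(2*k+2)) = real (2*k+1)" by (simp add: field_simps)
    have "((s*z)^(2*k+2)) powr (real(2*k+1)/real(2*k+2)) = (s*z) powr (real (2*k+2) * (real(2*k+1)/real(2*k+2)))"
      unfolding e1 by (rule powr_powr)
    also have "\<dots> = (s*z)^(2*k+1)" unfolding e2 using powr_realpow[OF sz] by metis
    finally show ?thesis unfolding D .
  qed
  moreover have "C^(2*k+1) / (s*z)^(2*k+1) = P"
    using s z0 unfolding C_def qP[symmetric] by (simp add: power_mult_distrib)
  ultimately show ?thesis using C0 Cs unfolding C_def q_def[symmetric] z_def[symmetric] by simp
qed

lemma alg_bwd:
  fixes k :: nat and s c :: real
  assumes c: "c > 0" and sc: "s > c"
  defines "P \<equiv> c^(2*k+1) / (s^(2*k+2) - c^(2*k+2)) powr (real(2*k+1)/real(2*k+2))"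
  shows "s * (P powr (1/real(2*k+1))) * ((1 + (P powr (1/real(2*k+1)))^(2*k+2)) powr (-1/real(2*k+2))) = c"
proof -
  define D where "D = s^(2*k+2) - c^(2*k+2)"
  have D0: "D > 0" unfolding D_def using power_strict_mono[of c s "2*k+2"] c sc by simp
  define w where "w = D powr (1/real(2*k+2))"
  have w0: "w > 0" using D0 by (simp add: w_def)
  have wM: "w^(2*k+2) = D" unfolding w_def using powr_pow_inv[OF D0, of "2*k+2"] by simp
  have wN: "D powr (real(2*k+1)/real(2*k+2)) = w^(2*k+1)"
  proof -
    have "w^(2*k+1) = w powr real (2*k+1)" using powr_realpow[OF w0] by metis
    also have "\<dots> = D powr (1/real(2*k+2) * real (2*k+1))" unfolding w_def by (rule powr_powr)
    also have "1/real(2*k+2) * real (2*k+1) = real(2*k+1)/real(2*k+2)" by simp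
    finally show ?thesis ..
  qed
  have P: "P = (c/w)^(2*k+1)" unfolding P_def D_def[symmetric] wN by (simp add: power_divide)
  have P0: "P > 0" unfolding P using c w0 by simp
  define q where "q = P powr (1/real(2*k+1))"
  have q0: "q > 0" using P0 by (simp add: q_def)
  have qP: "q^(2*k+1) = P" unfolding q_def using powr_pow_inv[OF P0, of "2*k+1"] by simp
  have qcw: "q = c/w" by (rule pow_inj_pos[of _ "2*k+1"]) (use qP P q0 c w0 in auto)
  define z where "z = (1 + q^(2*k+2)) powr (-1/real(2*k+2))"
  have X0: "1 + q^(2*k+2) > 0" using q0 by (simp add: add_pos_nonneg)
  have z0: "z > 0" unfolding z_def using X0 by simp
  have zq: "z^(2*k+2)*(1+q^(2*k+2)) = 1" unfolding z_def using powr_pow_neg_inv[OF X0, of "2*k+2"] by simp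
  have "1 + q^(2*k+2) = (w^(2*k+2) + c^(2*k+2)) / w^(2*k+2)"
    unfolding qcw using w0 by (simp add: power_divide field_simps)
  also have "w^(2*k+2) + c^(2*k+2) = s^(2*k+2)" using wM by (simp add: D_def)
  finally have hX: "1 + q^(2*k+2) = s^(2*k+2) / w^(2*k+2)" .
  have "z^(2*k+2) * (s^(2*k+2) / w^(2*k+2)) = 1" using zq unfolding hX .
  then have "z^(2*k+2) = w^(2*k+2) / s^(2*k+2)" using w0 sc c by (simp add: field_simps)
  then have "z^(2*k+2) = (w/s)^(2*k+2)" by (simp add: power_divide)
  then have "z = w/s" by (rule pow_inj_pos) (use z0 w0 sc c in auto)
  then show ?thesis using qcw w0 sc c unfolding q_def[symmetric] z_def[symmetric] by simp
qed

lemma g_cont: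
  fixes c :: real and N M :: nat
  assumes c: "c > 0" and M: "M > 0"
  shows "continuous_on {c<..} (\<lambda>\<rho>. c^N / (\<rho>^M - c^M) powr (real N / real M))"
proof -
  have pos: "x^M - c^M > 0" if "x \<in> {c<..}" for x
    using that c M power_strict_mono[of c x M] by simp
  show ?thesis by (intro continuous_intros ballI) (use pos in force)+
qed

lemma g_pos:
  fixes c s :: real and N M :: nat
  assumes c: "c > 0" and M: "M > 0" and s: "s > c"
  shows "c^N / (s^M - c^M) powr (real N / real M) > 0"
proof -
  have "s^M - c^M > 0" using s c M power_strict_mono[of c s M] by simp
  then show ?thesis using c by simp
qed

theorem theorem4p1:
  fixes m :: nat and J :: "real set" and u :: "real \<Rightarrow> real"
  assumes "m \<ge> 2"
    and "open J" and "is_interval J" and "J \<noteq> {}" and "J \<subseteq> {0<..}"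
    and "\<forall>n. \<forall>x\<in>J. ((deriv ^^ n) u) differentiable (at x)"
    and "\<forall>\<alpha>\<in>J. deriv u \<alpha> \<noteq> 0"
  shows "minimal_on m (\<lambda>\<alpha> v. vector [\<alpha> * cos v, \<alpha> * sin v, u \<alpha>]) (J \<times> UNIV)
    \<longleftrightarrow> (\<exists>c2>0. \<exists>c3. \<exists>\<sigma>\<in>{1, -1::real}. J \<subseteq> {c2<..} \<and>
          (\<forall>\<alpha>\<in>J. u \<alpha> = \<sigma> * integral {c2..\<alpha>}
              (\<lambda>\<rho>. c2 ^ (2*m-1) / (\<rho> ^ (2*m) - c2 ^ (2*m)) powr (real (2*m-1) / real (2*m)))
              + c3))"
proof -
  obtain k where m: "m = Suc k" using assms(1) by (cases m) auto
  have k: "k \<ge> 1" using assms(1) m by simp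
  have N: "2*m-1 = 2*k+1" and M: "2*m = 2*k+2" using m by simp_all
  note Jo = assms(2) and Ji = assms(3) and Jne = assms(4) and Jp = assms(5)
  have ud: "\<forall>x\<in>J. u differentiable (at x)"
  proof -
    have "\<forall>x\<in>J. ((deriv ^^ 0) u) differentiable (at x)" using assms(6) by blast
    then show ?thesis by simp
  qed
  have udd: "\<forall>x\<in>J. deriv u differentiable (at x)"
  proof -
    have "\<forall>x\<in>J. ((deriv ^^ 1) u) differentiable (at x)" using assms(6) by blast
    then show ?thesis by simp
  qed
  have surf: "(\<lambda>\<alpha> v. vector [\<alpha> * cos v, \<alpha> * sin v, u \<alpha>]) = surf u" by (simp add: surf_def)
  have M0: "(0::nat) < 2*k+2" by simp
  have NM: "2*k+1 < 2*k+2" "0 < 2*k+1" by simp_all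
  have N': "2*k+2-1 = 2*k+1" by simp
  have M2: "2*Suc k = 2*k+2" by simp
  show ?thesis unfolding surf m unfolding M2 N'
  proof
    assume min: "minimal_on (Suc k) (surf u) (J \<times> UNIV)"
    have cont: "continuous_on J (deriv u)"
      using udd by (meson continuous_at_imp_continuous_on differentiable_imp_continuous_within)
    obtain sg where sg: "sg = 1 \<or> sg = -1" and pos: "\<forall>t\<in>J. sg * deriv u t > 0"
      using const_sign[OF Ji Jne cont assms(7)] by blast
    obtain C where C: "\<forall>s\<in>J. s * ((sg * deriv u s) powr (1/real(2*k+1))) * ((1 + ((sg * deriv u s) powr (1/real(2*k+1)))^(2*k+2)) powr (-1/real(2*k+2))) = C"
      using core[OF k Jo Ji Jp ud udd sg pos] min by blast
    obtain s0 where s0: "s0 \<in> J" using Jne by blast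
    have C0: "C > 0" using alg_fwd[of s0 "sg * deriv u s0" k] C s0 Jp pos by auto
    have Cs: "C < s" and hP: "sg * deriv u s = C^(2*k+1) / (s^(2*k+2) - C^(2*k+2)) powr (real(2*k+1)/real(2*k+2))"
      if s: "s \<in> J" for s
    proof -
      have "s > 0" using s Jp by auto
      from alg_fwd[OF this pos[rule_format, OF s], of k] C s
      show "C < s" "sg * deriv u s = C^(2*k+1) / (s^(2*k+2) - C^(2*k+2)) powr (real(2*k+1)/real(2*k+2))" by auto
    qed
    define G where "G = (\<lambda>y. integral {C..y} (\<lambda>\<rho>. C^(2*k+1) / (\<rho>^(2*k+2) - C^(2*k+2)) powr (real(2*k+1)/real(2*k+2))))"
    have Gd: "DERIV G s :> C^(2*k+1) / (s^(2*k+2) - C^(2*k+2)) powr (real(2*k+1)/real(2*k+2))" if s: "s \<in> J" for s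
      unfolding G_def by (rule G_deriv[OF g_integrable[OF C0 NM] Cs[OF s] g_cont[OF C0 M0]])
    have "DERIV (\<lambda>y. u y - sg * G y) s :> 0" if s: "s \<in> J" for s
    proof -
      have du: "DERIV u s :> deriv u s" using ud s DERIV_deriv_iff_real_differentiable by blast
      have "DERIV (\<lambda>y. u y - sg * G y) s :> deriv u s - sg * (C^(2*k+1) / (s^(2*k+2) - C^(2*k+2)) powr (real(2*k+1)/real(2*k+2)))"
        by (intro DERIV_diff du DERIV_cmult Gd[OF s])
      moreover have "deriv u s - sg * (C^(2*k+1) / (s^(2*k+2) - C^(2*k+2)) powr (real(2*k+1)/real(2*k+2))) = 0"
        unfolding hP[OF s, symmetric] using sg by auto
      ultimately show ?thesis by simp
    qed
    then obtain c3 where c3: "\<forall>s\<in>J. u s - sg * G s = c3"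
      using has_field_derivative_zero_constant[of J "\<lambda>y. u y - sg * G y"] Ji is_interval_convex
      by (meson has_field_derivative_at_within)
    show "\<exists>c2>0. \<exists>c3. \<exists>\<sigma>\<in>{1, -1::real}. J \<subseteq> {c2<..} \<and>
          (\<forall>\<alpha>\<in>J. u \<alpha> = \<sigma> * integral {c2..\<alpha>}
              (\<lambda>\<rho>. c2 ^ (2*k+1) / (\<rho> ^ (2*k+2) - c2 ^ (2*k+2)) powr (real (2*k+1) / real (2*k+2))) + c3)"
    proof -
      have A: "J \<subseteq> {C<..}" using Cs by auto
      have B: "sg \<in> {1, -1}" using sg by auto
      have D: "\<forall>\<alpha>\<in>J. u \<alpha> = sg * integral {C..\<alpha>}
              (\<lambda>\<rho>. C ^ (2*k+1) / (\<rho> ^ (2*k+2) - C ^ (2*k+2)) powr (real (2*k+1) / real (2*k+2))) + c3"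
        using c3 unfolding G_def by (auto simp: algebra_simps)
      show ?thesis using C0 A B D by blast
    qed
  next
    assume "\<exists>c2>0. \<exists>c3. \<exists>\<sigma>\<in>{1, -1::real}. J \<subseteq> {c2<..} \<and>
          (\<forall>\<alpha>\<in>J. u \<alpha> = \<sigma> * integral {c2..\<alpha>}
              (\<lambda>\<rho>. c2 ^ (2*k+1) / (\<rho> ^ (2*k+2) - c2 ^ (2*k+2)) powr (real (2*k+1) / real (2*k+2))) + c3)"
    then obtain c2 c3 \<sigma> where c2: "c2 > 0" and \<sigma>m: "\<sigma> \<in> {1, -1}" and Jc: "J \<subseteq> {c2<..}"
      and ueq: "\<forall>\<alpha>\<in>J. u \<alpha> = \<sigma> * integral {c2..\<alpha>}
              (\<lambda>\<rho>. c2 ^ (2*k+1) / (\<rho> ^ (2*k+2) - c2 ^ (2*k+2)) powr (real (2*k+1) / real (2*k+2))) + c3"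
      by blast
    have \<sigma>: "\<sigma> = 1 \<or> \<sigma> = -1" using \<sigma>m by auto
    define G where "G = (\<lambda>y. integral {c2..y} (\<lambda>\<rho>. c2^(2*k+1) / (\<rho>^(2*k+2) - c2^(2*k+2)) powr (real(2*k+1)/real(2*k+2))))"
    have du: "deriv u s = \<sigma> * (c2^(2*k+1) / (s^(2*k+2) - c2^(2*k+2)) powr (real(2*k+1)/real(2*k+2)))" if s: "s \<in> J" for s
    proof -
      have sc: "c2 < s" using Jc s by auto
      have "DERIV G s :> c2^(2*k+1) / (s^(2*k+2) - c2^(2*k+2)) powr (real(2*k+1)/real(2*k+2))"
        unfolding G_def by (rule G_deriv[OF g_integrable[OF c2 NM] sc g_cont[OF c2 M0]])
      then have "DERIV (\<lambda>y. \<sigma> * G y + c3) s :> \<sigma> * (c2^(2*k+1) / (s^(2*k+2) - c2^(2*k+2)) powr (real(2*k+1)/real(2*k+2))) + 0"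
        by (intro DERIV_add DERIV_cmult DERIV_const)
      then have "DERIV u s :> \<sigma> * (c2^(2*k+1) / (s^(2*k+2) - c2^(2*k+2)) powr (real(2*k+1)/real(2*k+2)))"
        using has_field_derivative_transform_within_open[OF _ Jo s, of "\<lambda>y. \<sigma> * G y + c3" _ u] ueq unfolding G_def by simp
      then show ?thesis by (rule DERIV_imp_deriv)
    qed
    have hP: "\<sigma> * deriv u s = c2^(2*k+1) / (s^(2*k+2) - c2^(2*k+2)) powr (real(2*k+1)/real(2*k+2))" if s: "s \<in> J" for s
      unfolding du[OF s] using \<sigma> by auto
    have pos: "\<forall>t\<in>J. \<sigma> * deriv u t > 0"
    proof
      fix t assume t: "t \<in> J"
      then have "c2 < t" using Jc by auto
      from g_pos[OF c2 M0 this, of "2*k+1"] show "\<sigma> * deriv u t > 0" unfolding hP[OF t] .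
    qed
    have "\<forall>s\<in>J. s * ((\<sigma> * deriv u s) powr (1/real(2*k+1))) * ((1 + ((\<sigma> * deriv u s) powr (1/real(2*k+1)))^(2*k+2)) powr (-1/real(2*k+2))) = c2"
    proof
      fix s assume s: "s \<in> J"
      have sc: "c2 < s" using Jc s by auto
      show "s * ((\<sigma> * deriv u s) powr (1/real(2*k+1))) * ((1 + ((\<sigma> * deriv u s) powr (1/real(2*k+1)))^(2*k+2)) powr (-1/real(2*k+2))) = c2"
        unfolding hP[OF s] by (rule alg_bwd[OF c2 sc])
    qed
    then show "minimal_on (Suc k) (surf u) (J \<times> UNIV)"
      using core[OF k Jo Ji Jp ud udd \<sigma> pos] by blast
  qed
qed

end
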